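(* Let $\sigma$ be a permutation, $f\in\mathbb Z_{\ge1}$ a colour and $\iota\in[|\sigma|+1]$. Then $$\mathbb C(\sigma^{*\iota})(|\sigma|+1)=f\iff z_\sigma(f)\le\iota<z_\sigma(f-1).$$
   Context: The RITMO colouring $\mathbb C(\sigma):[|\sigma|]\to\mathbb Z_{\ge1}$ of a permutation $\sigma$ processes indices in decreasing order of value, giving each index $i$ the smallest positive integer $c$ such that no already coloured index $j<i$ has colour $c$ (equivalently: colour 1 on left-to-right maxima, colour 2 on the left-to-right maxima of the remaining entries, etc.). For $\sigma\in\mathcal S_m$ and $\iota\in[m+1]$, $\sigma^{*\iota}$ is the permutation of $[m+1]$ with entries in the same relative order as $\sigma(1),\dots,\sigma(m),\iota-1/2$. For a colour $f\ge1$: if some index of $\sigma$ has colour $f$ under $\mathbb C(\sigma)$, let $p$ be the largest such index and set $z_\sigma(f)=\sigma(p)+1$; otherwise $z_\sigma(f)=1$. By convention $z_\sigma(0)=|\sigma|+2$. *)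

theory Defs
  imports "HOL-Combinatorics.Permutations"
begin

text \<open>A permutation sigma of [m] = {1..m} is a function with sigma permutes {1..m}.
  Colourings are functions nat => nat; value 0 means "not (yet) coloured".\<close>

text \<open>Process the k largest values m, m-1, ..., m-k+1 in decreasing order; the index i
  holding the current value receives the least colour c >= 1 such that no already
  coloured index j < i has colour c.\<close>
primrec ritmo_aux :: "(nat \<Rightarrow> nat) \<Rightarrow> nat \<Rightarrow> nat \<Rightarrow> (nat \<Rightarrow> nat)" where
  "ritmo_aux \<sigma> m 0 = (\<lambda>i. 0)"
| "ritmo_aux \<sigma> m (Suc k) =
     (let C = ritmo_aux \<sigma> m k; i = inv_into {1..m} \<sigma> (m - k)
      in C(i := (LEAST c. 1 \<le> c \<and> \<not> (\<exists>j. j < i \<and> C j = c))))"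

definition ritmo :: "(nat \<Rightarrow> nat) \<Rightarrow> nat \<Rightarrow> (nat \<Rightarrow> nat)" where
  "ritmo \<sigma> m = ritmo_aux \<sigma> m m"

text \<open>sigma^{*iota}: permutation of [m+1] with entries in the same relative order as
  sigma(1),...,sigma(m), iota - 1/2 (identity outside [m+1]).\<close>
definition ins_perm :: "(nat \<Rightarrow> nat) \<Rightarrow> nat \<Rightarrow> nat \<Rightarrow> (nat \<Rightarrow> nat)" where
  "ins_perm \<sigma> m \<iota> = (\<lambda>i. if i \<in> {1..m} then (if \<sigma> i < \<iota> then \<sigma> i else \<sigma> i + 1)
                          else if i = m + 1 then \<iota> else i)"

definition zval :: "(nat \<Rightarrow> nat) \<Rightarrow> nat \<Rightarrow> nat \<Rightarrow> nat" where
  "zval \<sigma> m f =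
     (if f = 0 then m + 2
      else if \<exists>p\<in>{1..m}. ritmo \<sigma> m p = f
      then \<sigma> (Max {p\<in>{1..m}. ritmo \<sigma> m p = f}) + 1
      else 1)"

end

theory Submission
  imports Defs
begin

lemma ra_Suc: "ritmo_aux s M (Suc k) = (ritmo_aux s M k)(inv_into {1..M} s (M - k) :=
   (LEAST c. 1 \<le> c \<and> \<not> (\<exists>j. j < inv_into {1..M} s (M - k) \<and> ritmo_aux s M k j = c)))"
  by (simp add: Let_def)

lemma least_ex: "\<exists>c. 1 \<le> c \<and> \<not> (\<exists>j. j < (x::nat) \<and> C j = (c::nat))"
proof -
  have "\<And>j. j < x \<Longrightarrow> C j \<le> Max (C ` {..<x})" by (rule Max_ge) auto
  then have "\<not> (\<exists>j<x. C j = Suc (Max (C ` {..<x})))" by (metis Suc_n_not_le_n)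
  then show ?thesis by (intro exI[of _ "Suc (Max (C ` {..<x}))"]) auto
qed

lemma least_props:
  fixes C :: "nat \<Rightarrow> nat" and x :: nat
  defines "c0 \<equiv> (LEAST c. 1 \<le> c \<and> \<not> (\<exists>j. j < x \<and> C j = c))"
  shows "1 \<le> c0" "\<And>j. j < x \<Longrightarrow> C j \<noteq> c0"
    "\<And>c. 1 \<le> c \<Longrightarrow> c < c0 \<Longrightarrow> \<exists>j<x. C j = c"
proof -
  have "1 \<le> c0 \<and> \<not> (\<exists>j. j < x \<and> C j = c0)"
    unfolding c0_def using least_ex[of x C] by (rule LeastI_ex)
  then show "1 \<le> c0" "\<And>j. j < x \<Longrightarrow> C j \<noteq> c0" by auto
  show "\<exists>j<x. C j = c" if "1 \<le> c" "c < c0" for c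
    using not_less_Least[OF that(2)[unfolded c0_def]] that(1) by auto
qed

lemma inv_val:
  assumes "bij_betw s {1..M} {1..M}" "v \<in> {1..M}"
  shows "inv_into {1..M} s v \<in> {1..M}" "s (inv_into {1..M} s v) = v"
  using assms bij_betw_inv_into_right[OF assms] inv_into_into[of v s "{1..M}"]
  by (auto simp: bij_betw_def)

lemma ra_inv:
  assumes bij: "bij_betw s {1..M} {1..M}" and "k \<le> M"
  shows "(\<forall>i. ritmo_aux s M k i \<noteq> 0 \<longleftrightarrow> i \<in> {1..M} \<and> M - k < s i)
    \<and> (\<forall>i c. ritmo_aux s M k i \<noteq> 0 \<longrightarrow> 1 \<le> c \<longrightarrow> c < ritmo_aux s M k i \<longrightarrow>
          (\<exists>j<i. s i < s j \<and> ritmo_aux s M k j = c))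
    \<and> (\<forall>i j. ritmo_aux s M k i \<noteq> 0 \<longrightarrow> j < i \<longrightarrow> ritmo_aux s M k j = ritmo_aux s M k i \<longrightarrow> s j < s i)"
  using assms(2)
proof (induction k)
  case 0
  have "\<And>i. i \<in> {1..M} \<Longrightarrow> \<not> M < s i" using bij_betw_apply[OF bij] by fastforce
  then show ?case by auto
next
  case (Suc k)
  define C where "C = ritmo_aux s M k"
  define x where "x = inv_into {1..M} s (M - k)"
  define c0 where "c0 = (LEAST c. 1 \<le> c \<and> \<not> (\<exists>j. j < x \<and> C j = c))"
  have C': "ritmo_aux s M (Suc k) = C(x := c0)" unfolding C_def x_def c0_def ra_Suc ..
  have vin: "M - k \<in> {1..M}" using Suc.prems by auto
  have xin: "x \<in> {1..M}" and sx: "s x = M - k" unfolding x_def using inv_val[OF bij vin] by auto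
  have inj: "inj_on s {1..M}" using bij by (simp add: bij_betw_def)
  from Suc.IH Suc.prems have I1: "\<And>i. C i \<noteq> 0 \<longleftrightarrow> i \<in> {1..M} \<and> M - k < s i"
    and I2: "\<And>i c. C i \<noteq> 0 \<Longrightarrow> 1 \<le> c \<Longrightarrow> c < C i \<Longrightarrow> \<exists>j<i. s i < s j \<and> C j = c"
    and I3: "\<And>i j. C i \<noteq> 0 \<Longrightarrow> j < i \<Longrightarrow> C j = C i \<Longrightarrow> s j < s i"
    unfolding C_def by auto
  have Cx: "C x = 0" using I1[of x] sx by auto
  have L1: "1 \<le> c0" and L2: "\<And>j. j < x \<Longrightarrow> C j \<noteq> c0"
    and L3: "\<And>c. 1 \<le> c \<Longrightarrow> c < c0 \<Longrightarrow> \<exists>j<x. C j = c"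
    unfolding c0_def using least_props by blast+
  have nx: "C i \<noteq> 0 \<Longrightarrow> i \<noteq> x" for i using Cx by auto
  have P1: "(C(x := c0)) i \<noteq> 0 \<longleftrightarrow> i \<in> {1..M} \<and> M - Suc k < s i" for i
  proof (cases "i = x")
    case True then show ?thesis using L1 xin sx Suc.prems by auto
  next
    case False
    have "i \<in> {1..M} \<Longrightarrow> s i \<noteq> M - k" using False inj_onD[OF inj _ _ xin] sx by metis
    then show ?thesis using False I1[of i] by auto
  qed
  have P2: "\<exists>j<i. s i < s j \<and> (C(x := c0)) j = c"
    if h: "(C(x := c0)) i \<noteq> 0" "1 \<le> c" "c < (C(x := c0)) i" for i c
  proof (cases "i = x")
    case True
    then obtain j where "j < x" "C j = c" using L3 h by auto
    then show ?thesis using True I1[of j] h(2) sx by (auto dest: nx)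
  next
    case False
    then obtain j where "j < i" "s i < s j" "C j = c" using I2[of i c] h by auto
    then show ?thesis using h(2) nx[of j] by auto
  qed
  have P3: "s j < s i"
    if "(C(x := c0)) i \<noteq> 0" "j < i" "(C(x := c0)) j = (C(x := c0)) i" for i j
  proof (cases "i = x")
    case True
    then show ?thesis using that L2[of j] by auto
  next
    case False
    then have Ci: "C i \<noteq> 0" using that by auto
    show ?thesis
    proof (cases "j = x")
      case True
      then show ?thesis using Ci I1[of i] sx by auto
    next
      case False
      then show ?thesis using I3[OF Ci that(2)] that \<open>i \<noteq> x\<close> by auto
    qed
  qed
  show ?case unfolding C' using P1 P2 P3 by blast
qed


lemma ra_keep:
  assumes bij: "bij_betw s {1..M} {1..M}" and "k \<le> k'" "k' \<le> M" and nz: "ritmo_aux s M k i \<noteq> 0"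
  shows "ritmo_aux s M k' i = ritmo_aux s M k i"
proof -
  have "k \<le> k' \<longrightarrow> k' \<le> M \<longrightarrow> ritmo_aux s M k' i = ritmo_aux s M k i" for k'
  proof (induction k')
    case 0 then show ?case by auto
  next
    case (Suc n)
    show ?case
    proof (intro impI)
      assume a: "k \<le> Suc n" "Suc n \<le> M"
      show "ritmo_aux s M (Suc n) i = ritmo_aux s M k i"
      proof (cases "k = Suc n")
        case True then show ?thesis by simp
      next
        case False
        then have eq: "ritmo_aux s M n i = ritmo_aux s M k i" using Suc.IH a by auto
        then have "M - n < s i" using ra_inv[OF bij, of n] a nz by auto
        moreover have "s (inv_into {1..M} s (M - n)) = M - n" using inv_val[OF bij, of "M - n"] a by auto
        ultimately have "inv_into {1..M} s (M - n) \<noteq> i" by auto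
        then show ?thesis using eq by (simp add: Let_def)
      qed
    qed
  qed
  then show ?thesis using assms by blast
qed

lemma ins_bij:
  assumes p: "\<sigma> permutes {1..m}" and io: "\<iota> \<in> {1..m+1}"
  shows "bij_betw (ins_perm \<sigma> m \<iota>) {1..m+1} {1..m+1}"
proof -
  have bs: "bij_betw \<sigma> {1..m} {1..m}" using p by (rule permutes_imp_bij)
  then have inj: "inj_on \<sigma> {1..m}" and rng: "\<And>i. i \<in> {1..m} \<Longrightarrow> \<sigma> i \<in> {1..m}"
    by (auto simp: bij_betw_def)
  have ij: "inj_on (ins_perm \<sigma> m \<iota>) {1..m+1}"
  proof (rule inj_onI)
    fix a b assume a: "a \<in> {1..m+1}" "b \<in> {1..m+1}" "ins_perm \<sigma> m \<iota> a = ins_perm \<sigma> m \<iota> b"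
    show "a = b"
    proof (cases "a = m+1"; cases "b = m+1")
      assume "a \<noteq> m+1" "b \<noteq> m+1"
      then have ab: "a \<in> {1..m}" "b \<in> {1..m}" using a by auto
      then show ?thesis using a(3) inj_onD[OF inj _ ab] unfolding ins_perm_def
        by (auto split: if_splits)
    next
      assume "a = m+1" "b \<noteq> m+1"
      then show ?thesis using a unfolding ins_perm_def by (auto split: if_splits)
    next
      assume "a \<noteq> m+1" "b = m+1"
      then show ?thesis using a unfolding ins_perm_def by (auto split: if_splits)
    qed auto
  qed
  have "ins_perm \<sigma> m \<iota> ` {1..m+1} \<subseteq> {1..m+1}"
    using rng io unfolding ins_perm_def by fastforce
  then show ?thesis using endo_inj_surj[OF _ _ ij] ij by (auto simp: bij_betw_def)
qed


lemma comb:
  fixes F \<sigma> z :: "nat \<Rightarrow> nat"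
  assumes F1: "\<And>i. F i \<noteq> 0 \<longleftrightarrow> i \<in> {1..m}"
    and F2: "\<And>i c. F i \<noteq> 0 \<Longrightarrow> 1 \<le> c \<Longrightarrow> c < F i \<Longrightarrow> \<exists>j<i. \<sigma> i < \<sigma> j \<and> F j = c"
    and F3: "\<And>i j. F i \<noteq> 0 \<Longrightarrow> j < i \<Longrightarrow> F j = F i \<Longrightarrow> \<sigma> j < \<sigma> i"
    and io: "1 \<le> \<iota>" "\<iota> \<le> m+1" and f: "1 \<le> f"
    and z: "\<And>g. z g = (if g = 0 then m+2 else if \<exists>p\<in>{1..m}. F p = g
              then \<sigma> (Max {p\<in>{1..m}. F p = g}) + 1 else 1)"
  shows "(LEAST c. 1 \<le> c \<and> \<not> (\<exists>j\<in>{1..m}. \<iota> \<le> \<sigma> j \<and> F j = c)) = f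
           \<longleftrightarrow> z f \<le> \<iota> \<and> \<iota> < z (f - 1)"
proof -
  define S where "S c \<longleftrightarrow> (\<exists>j\<in>{1..m}. \<iota> \<le> \<sigma> j \<and> F j = c)" for c
  have zf: "S g \<longleftrightarrow> \<iota> < z g" if g: "1 \<le> g" for g
  proof (cases "\<exists>p\<in>{1..m}. F p = g")
    case True
    define A where "A = {p\<in>{1..m}. F p = g}"
    have fA: "finite A" "A \<noteq> {}" unfolding A_def using True by auto
    define p where "p = Max A"
    have pA: "p \<in> A" unfolding p_def using Max_in[OF fA] .
    have le: "\<sigma> j \<le> \<sigma> p" if "j \<in> A" for j
    proof -
      have "j \<le> p" unfolding p_def using Max_ge[OF fA(1) that] .
      moreover have "j < p \<Longrightarrow> \<sigma> j < \<sigma> p"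
        using F3[of p j] pA that F1[of p] unfolding A_def by auto
      ultimately show ?thesis by (cases "j = p") auto
    qed
    have zg: "z g = \<sigma> p + 1" using z[of g] g True unfolding p_def A_def by auto
    have "S g \<longleftrightarrow> \<iota> \<le> \<sigma> p"
    proof
      assume "S g"
      then obtain j where "j \<in> A" "\<iota> \<le> \<sigma> j" unfolding S_def A_def by auto
      then show "\<iota> \<le> \<sigma> p" using le by fastforce
    next
      assume "\<iota> \<le> \<sigma> p" then show "S g" using pA unfolding S_def A_def by auto
    qed
    then show ?thesis using zg by auto
  next
    case False
    then show ?thesis using z[of g] g io unfolding S_def by auto
  qed
  have down: "S (c - 1)" if hc: "S c" "2 \<le> c" for c
  proof -
    obtain j where j: "j \<in> {1..m}" "\<iota> \<le> \<sigma> j" "F j = c" using hc unfolding S_def by auto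
    have "F j \<noteq> 0" using F1 j(1) by blast
    then have "\<exists>j'<j. \<sigma> j < \<sigma> j' \<and> F j' = c - 1" using F2[of j "c - 1"] hc(2) j(3) by auto
    then obtain j' where "\<sigma> j < \<sigma> j'" "F j' = c - 1" by auto
    moreover then have "j' \<in> {1..m}" using F1[of j'] hc(2) by auto
    ultimately show ?thesis using j unfolding S_def by (intro bexI[of _ j']) auto
  qed
  have downall: "S (d + n) \<Longrightarrow> S d" if "1 \<le> d" for d n
  proof (induction n)
    case 0 then show ?case by simp
  next
    case (Suc n)
    then show ?case using down[of "d + Suc n"] that by auto
  qed
  have ex: "\<exists>c. 1 \<le> c \<and> \<not> S c"
  proof -
    have "\<And>j. j \<in> {1..m} \<Longrightarrow> F j \<le> Max (F ` {1..m})" by (rule Max_ge) auto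
    then have "\<not> S (Suc (Max (F ` {1..m})))" unfolding S_def by (metis Suc_n_not_le_n)
    then show ?thesis by (intro exI[of _ "Suc (Max (F ` {1..m}))"]) auto
  qed
  have L: "(LEAST c. 1 \<le> c \<and> \<not> S c) = f \<longleftrightarrow> \<not> S f \<and> (f = 1 \<or> S (f - 1))"
  proof
    assume h: "(LEAST c. 1 \<le> c \<and> \<not> S c) = f"
    have "1 \<le> f \<and> \<not> S f" using LeastI_ex[OF ex] h by simp
    moreover have "f \<noteq> 1 \<Longrightarrow> S (f - 1)"
      using not_less_Least[of "f - 1" "\<lambda>c. 1 \<le> c \<and> \<not> S c"] h f by auto
    ultimately show "\<not> S f \<and> (f = 1 \<or> S (f - 1))" by auto
  next
    assume h: "\<not> S f \<and> (f = 1 \<or> S (f - 1))"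
    show "(LEAST c. 1 \<le> c \<and> \<not> S c) = f"
    proof (rule Least_equality)
      show "1 \<le> f \<and> \<not> S f" using h f by auto
    next
      fix c assume c: "1 \<le> c \<and> \<not> S c"
      show "f \<le> c"
      proof (rule ccontr)
        assume "\<not> f \<le> c"
        then have "c < f" by simp
        then have "S (f - 1)" "f - 1 = c + (f - 1 - c)" using h c by auto
        then show False using downall[of c "f - 1 - c"] c by auto
      qed
    qed
  qed
  have "(\<lambda>c. 1 \<le> c \<and> \<not> (\<exists>j\<in>{1..m}. \<iota> \<le> \<sigma> j \<and> F j = c)) = (\<lambda>c. 1 \<le> c \<and> \<not> S c)"
    unfolding S_def ..
  moreover have "(f = 1 \<or> S (f - 1)) \<longleftrightarrow> \<iota> < z (f - 1)"
  proof (cases "f = 1")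
    case True then show ?thesis using z[of 0] io by auto
  next
    case False then show ?thesis using zf[of "f - 1"] f by auto
  qed
  moreover have "\<not> S f \<longleftrightarrow> z f \<le> \<iota>" using zf[OF f] by auto
  ultimately show ?thesis using L by simp
qed


theorem mainTheorem16:
  fixes \<sigma> :: "nat \<Rightarrow> nat" and m f \<iota> :: nat
  assumes "\<sigma> permutes {1..m}"
    and "1 \<le> f"
    and "\<iota> \<in> {1..m+1}"
  shows "ritmo (ins_perm \<sigma> m \<iota>) (m + 1) (m + 1) = f \<longleftrightarrow>
           zval \<sigma> m f \<le> \<iota> \<and> \<iota> < zval \<sigma> m (f - 1)"
proof -
  define \<tau> where "\<tau> = ins_perm \<sigma> m \<iota>"
  define K where "K = m + 1 - \<iota>"
  have io: "1 \<le> \<iota>" "\<iota> \<le> m+1" using assms(3) by auto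
  have bs: "bij_betw \<sigma> {1..m} {1..m}" using assms(1) by (rule permutes_imp_bij)
  have bt: "bij_betw \<tau> {1..m+1} {1..m+1}" unfolding \<tau>_def using ins_bij assms by blast
  have injt: "inj_on \<tau> {1..m+1}" using bt by (simp add: bij_betw_def)
  have eqk: "k \<le> K \<Longrightarrow> ritmo_aux \<tau> (m+1) k = ritmo_aux \<sigma> m k" for k
  proof (induction k)
    case 0 show ?case by simp
  next
    case (Suc k)
    define x where "x = inv_into {1..m} \<sigma> (m - k)"
    have "m - k \<in> {1..m}" using Suc.prems io unfolding K_def by auto
    then have x: "x \<in> {1..m}" "\<sigma> x = m - k" unfolding x_def using inv_val[OF bs] by auto
    have "\<tau> x = m + 1 - k" using x Suc.prems io unfolding \<tau>_def ins_perm_def K_def by auto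
    then have "inv_into {1..m+1} \<tau> (m + 1 - k) = x" using x by (intro inv_into_f_eq[OF injt]) auto
    then have inv: "inv_into {1..m+1} \<tau> (m + 1 - k) = inv_into {1..m} \<sigma> (m - k)" by (simp add: x_def)
    have IH: "ritmo_aux \<tau> (m+1) k = ritmo_aux \<sigma> m k" using Suc by auto
    show ?case unfolding ra_Suc inv IH ..
  qed
  define C where "C = ritmo_aux \<sigma> m K"
  have KM: "K \<le> m" using io unfolding K_def by auto
  have "\<tau> (m+1) = \<iota>" unfolding \<tau>_def ins_perm_def by auto
  then have inv: "inv_into {1..m+1} \<tau> (m+1-K) = m+1"
    using io unfolding K_def by (intro inv_into_f_eq[OF injt]) auto
  have step: "ritmo_aux \<tau> (m+1) (Suc K) (m+1) = (LEAST c. 1 \<le> c \<and> \<not> (\<exists>j. j < m+1 \<and> C j = c))"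
    unfolding ra_Suc inv eqk[OF order_refl] C_def by simp
  have nz: "ritmo_aux \<tau> (m+1) (Suc K) (m+1) \<noteq> 0" unfolding step using least_props(1)
    by (metis not_one_le_zero)
  have fin: "ritmo \<tau> (m+1) (m+1) = ritmo_aux \<tau> (m+1) (Suc K) (m+1)"
    unfolding ritmo_def using ra_keep[OF bt, of "Suc K" "m+1" "m+1"] nz KM by auto
  define F where "F = ritmo \<sigma> m"
  have rng: "\<And>i. i \<in> {1..m} \<Longrightarrow> \<sigma> i \<in> {1..m}" using bs by (auto simp: bij_betw_def)
  have Finv: "(\<forall>i. F i \<noteq> 0 \<longleftrightarrow> i \<in> {1..m} \<and> m - m < \<sigma> i)
    \<and> (\<forall>i c. F i \<noteq> 0 \<longrightarrow> 1 \<le> c \<longrightarrow> c < F i \<longrightarrow> (\<exists>j<i. \<sigma> i < \<sigma> j \<and> F j = c))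
    \<and> (\<forall>i j. F i \<noteq> 0 \<longrightarrow> j < i \<longrightarrow> F j = F i \<longrightarrow> \<sigma> j < \<sigma> i)"
    unfolding F_def ritmo_def using ra_inv[OF bs order_refl] .
  have F1: "\<And>i. F i \<noteq> 0 \<longleftrightarrow> i \<in> {1..m}" using Finv rng by fastforce
  have Cinv: "\<And>j. C j \<noteq> 0 \<longleftrightarrow> j \<in> {1..m} \<and> m - K < \<sigma> j"
    unfolding C_def using ra_inv[OF bs KM] by blast
  have mK: "m - K < \<sigma> j \<longleftrightarrow> \<iota> \<le> \<sigma> j" for j using io unfolding K_def by auto
  have CF: "C j \<noteq> 0 \<Longrightarrow> C j = F j" for j
    unfolding C_def F_def ritmo_def using ra_keep[OF bs KM order_refl] by metis
  have S: "(\<lambda>c. 1 \<le> c \<and> \<not> (\<exists>j. j < m+1 \<and> C j = c))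
      = (\<lambda>c. 1 \<le> c \<and> \<not> (\<exists>j\<in>{1..m}. \<iota> \<le> \<sigma> j \<and> F j = c))"
  proof (intro ext iffI)
    fix c assume h: "1 \<le> c \<and> \<not> (\<exists>j. j < m+1 \<and> C j = c)"
    show "1 \<le> c \<and> \<not> (\<exists>j\<in>{1..m}. \<iota> \<le> \<sigma> j \<and> F j = c)"
    proof (intro conjI notI)
      show "1 \<le> c" using h by simp
      assume "\<exists>j\<in>{1..m}. \<iota> \<le> \<sigma> j \<and> F j = c"
      then obtain j where j: "j \<in> {1..m}" "\<iota> \<le> \<sigma> j" "F j = c" by auto
      then have "C j \<noteq> 0" using Cinv mK by blast
      then show False using h CF j by fastforce
    qed
  next
    fix c assume h: "1 \<le> c \<and> \<not> (\<exists>j\<in>{1..m}. \<iota> \<le> \<sigma> j \<and> F j = c)"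
    show "1 \<le> c \<and> \<not> (\<exists>j. j < m+1 \<and> C j = c)"
    proof (intro conjI notI)
      show "1 \<le> c" using h by simp
      assume "\<exists>j. j < m+1 \<and> C j = c"
      then obtain j where j: "C j = c" by auto
      then have "C j \<noteq> 0" using h by auto
      then show False using h CF j Cinv mK by fastforce
    qed
  qed
  have "ritmo \<tau> (m+1) (m+1) = (LEAST c. 1 \<le> c \<and> \<not> (\<exists>j\<in>{1..m}. \<iota> \<le> \<sigma> j \<and> F j = c))"
    using fin step S by simp
  moreover have "(LEAST c. 1 \<le> c \<and> \<not> (\<exists>j\<in>{1..m}. \<iota> \<le> \<sigma> j \<and> F j = c)) = f
           \<longleftrightarrow> zval \<sigma> m f \<le> \<iota> \<and> \<iota> < zval \<sigma> m (f - 1)"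
  proof (rule comb[OF F1 _ _ io assms(2)])
    show "\<And>i c. F i \<noteq> 0 \<Longrightarrow> 1 \<le> c \<Longrightarrow> c < F i \<Longrightarrow> \<exists>j<i. \<sigma> i < \<sigma> j \<and> F j = c"
      using Finv by blast
    show "\<And>i j. F i \<noteq> 0 \<Longrightarrow> j < i \<Longrightarrow> F j = F i \<Longrightarrow> \<sigma> j < \<sigma> i" using Finv by blast
    show "\<And>g. zval \<sigma> m g = (if g = 0 then m+2 else if \<exists>p\<in>{1..m}. F p = g
              then \<sigma> (Max {p\<in>{1..m}. F p = g}) + 1 else 1)"
      unfolding zval_def F_def by simp
  qed
  ultimately show ?thesis unfolding \<tau>_def by simp
qed

end
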